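(* Let $q\ge 2$ be a prime power and let $n\ge 6$ be divisible by $3$. Then every $3$-spread of $\mathbb{F}_q^n$ is a completely regular code in the Grassmann graph $J_q(n,3)$ with covering radius $2$.
   Context: The Grassmann graph $J_q(n,k)$ has as vertices the $k$-dimensional subspaces of $\mathbb{F}_q^n$, adjacent iff they meet in a $(k-1)$-dimensional subspace. A $3$-spread is a set of $3$-dimensional subspaces of $\mathbb{F}_q^n$ such that every nonzero vector lies in exactly one of them. For a nonempty vertex set $C$ of a connected regular graph, $C_i$ denotes the set of vertices at distance exactly $i$ from $C$, the covering radius $\rho$ is the largest $i$ with $C_i\ne\emptyset$, and $C$ is completely regular if there are numbers $\gamma_i,\alpha_i,\beta_i$ such that every vertex of $C_i$ has exactly $\gamma_i$ neighbours in $C_{i-1}$, $\alpha_i$ in $C_i$ and $\beta_i$ in $C_{i+1}$, for all $i$. *)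

theory Defs
  imports "HOL-Analysis.Analysis"
begin

text \<open>Subspaces of F_q^n, with F_q a finite field type 'a and n = CARD('n).\<close>

definition ksubspaces :: "nat \<Rightarrow> ('a::field ^ 'n::finite) set set" where
  "ksubspaces k = {U. vec.subspace U \<and> vec.dim U = k}"

definition grassmann_adj :: "nat \<Rightarrow> ('a::field ^ 'n::finite) set \<Rightarrow> ('a ^ 'n) set \<Rightarrow> bool" where
  "grassmann_adj k U W \<longleftrightarrow> U \<in> ksubspaces k \<and> W \<in> ksubspaces k \<and> vec.dim (U \<inter> W) = k - 1"

definition spread3 :: "('a::field ^ 'n::finite) set set \<Rightarrow> bool" where
  "spread3 S \<longleftrightarrow> S \<subseteq> ksubspaces 3 \<and> (\<forall>x. x \<noteq> 0 \<longrightarrow> (\<exists>!U. U \<in> S \<and> x \<in> U))"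

fun ball_set :: "'v set \<Rightarrow> ('v \<Rightarrow> 'v \<Rightarrow> bool) \<Rightarrow> 'v set \<Rightarrow> nat \<Rightarrow> 'v set" where
  "ball_set V E C 0 = C \<inter> V"
| "ball_set V E C (Suc i) = ball_set V E C i \<union> {y \<in> V. \<exists>x \<in> ball_set V E C i. E x y}"

fun layer :: "'v set \<Rightarrow> ('v \<Rightarrow> 'v \<Rightarrow> bool) \<Rightarrow> 'v set \<Rightarrow> nat \<Rightarrow> 'v set" where
  "layer V E C 0 = C \<inter> V"
| "layer V E C (Suc i) = ball_set V E C (Suc i) - ball_set V E C i"

definition covering_radius :: "'v set \<Rightarrow> ('v \<Rightarrow> 'v \<Rightarrow> bool) \<Rightarrow> 'v set \<Rightarrow> nat" where
  "covering_radius V E C = (GREATEST i. layer V E C i \<noteq> {})"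

definition completely_regular :: "'v set \<Rightarrow> ('v \<Rightarrow> 'v \<Rightarrow> bool) \<Rightarrow> 'v set \<Rightarrow> bool" where
  "completely_regular V E C \<longleftrightarrow>
     (\<exists>\<gamma> \<alpha> \<beta> :: nat \<Rightarrow> nat. \<forall>i. \<forall>x \<in> layer V E C i.
        card {y \<in> V. E x y \<and> 0 < i \<and> y \<in> layer V E C (i - 1)} = \<gamma> i \<and>
        card {y \<in> V. E x y \<and> y \<in> layer V E C i} = \<alpha> i \<and>
        card {y \<in> V. E x y \<and> y \<in> layer V E C (Suc i)} = \<beta> i)"

end

theory Submission
  imports Defs
begin


lemma card_subspace:
  fixes U :: "('a::{field,finite} ^'n::finite) set"
  assumes "vec.subspace U"
  shows "card U = CARD('a) ^ vec.dim U"
proof -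
  obtain B where B: "B \<subseteq> U" "vec.independent B" "U \<subseteq> vec.span B" "card B = vec.dim U"
    using vec.basis_exists by blast
  have fB: "finite B" by simp
  have UB: "vec.span B = U" using B assms vec.span_subspace by blast
  let ?f = "\<lambda>c. \<Sum>v\<in>B. c v *s v"
  have SP: "vec.span B = range ?f" by (rule vec.span_finite[OF fB])
  have img: "?f ` (PiE B (\<lambda>_. UNIV)) = U"
  proof (rule set_eqI)
    fix x
    show "x \<in> ?f ` (PiE B (\<lambda>_. UNIV)) \<longleftrightarrow> x \<in> U"
    proof
      assume "x \<in> ?f ` (PiE B (\<lambda>_. UNIV))"
      then obtain c where c: "x = ?f c" by auto
      have "x \<in> range ?f" unfolding c by (rule rangeI)
      then show "x \<in> U" using SP UB by simp
    next
      assume "x \<in> U"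
      then have "x \<in> range ?f" using SP UB by simp
      then obtain u where u: "x = ?f u" by auto
      have r: "restrict u B \<in> PiE B (\<lambda>_. UNIV)" by simp
      have "?f (restrict u B) = ?f u" by (rule sum.cong) simp_all
      then have "x = ?f (restrict u B)" using u by simp
      then show "x \<in> ?f ` (PiE B (\<lambda>_. UNIV))" using r by (rule image_eqI)
    qed
  qed
  have inj: "inj_on ?f (PiE B (\<lambda>_. UNIV))"
  proof (rule inj_onI)
    fix c d assume c: "c \<in> PiE B (\<lambda>_. UNIV)" and d: "d \<in> PiE B (\<lambda>_. UNIV)" and eq: "?f c = ?f d"
    have "(\<Sum>v\<in>B. (c v - d v) *s v) = (\<Sum>v\<in>B. c v *s v - d v *s v)"
      by (rule sum.cong) (simp_all add: vec.scale_left_diff_distrib)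
    also have "\<dots> = ?f c - ?f d" by (rule sum_subtractf)
    also have "\<dots> = 0" using eq by simp
    finally have z: "(\<Sum>v\<in>B. (c v - d v) *s v) = 0" .
    have ind: "\<forall>c. (\<Sum>v\<in>B. c v *s v) = 0 \<longrightarrow> (\<forall>v \<in> B. c v = 0)"
      using B(2) vec.independent_explicit[of B] by blast
    have "\<forall>v\<in>B. c v - d v = 0" using ind[rule_format, OF z] by auto
    then show "c = d" using c d by (intro PiE_ext) auto
  qed
  have "card U = card (PiE B (\<lambda>_. (UNIV::'a set)))"
    using card_image[OF inj] img by simp
  also have "\<dots> = CARD('a) ^ card B" by (simp add: card_PiE)
  finally show ?thesis using B by simp
qed


definition subs :: "nat \<Rightarrow> ('a::field ^'n::finite) set \<Rightarrow> ('a ^'n) set \<Rightarrow> ('a ^'n) set set" where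
  "subs k A B = {W. vec.subspace W \<and> vec.dim W = k \<and> A \<subseteq> W \<and> W \<subseteq> B}"

lemma dim_eq_sub:
  fixes X Y :: "('a::field ^'n::finite) set"
  assumes "vec.subspace X" "vec.subspace Y" "X \<subseteq> Y" "vec.dim X = vec.dim Y"
  shows "X = Y"
  using vec.subspace_dim_equal[OF assms(1,2,3)] assms(4) by simp

lemma span_insert_dim:
  fixes A :: "('a::field ^'n::finite) set"
  assumes "vec.subspace A" "x \<notin> A"
  shows "vec.dim (vec.span (insert x A)) = vec.dim A + 1"
proof -
  have "vec.span A = A" using assms(1) by simp
  then have "x \<notin> vec.span A" using assms(2) by (simp only: not_False_eq_True)
  then show ?thesis using vec.dim_insert[of x A] by simp
qed

lemma count_ext:
  fixes A B :: "('a::{field,finite} ^'n::finite) set"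
  assumes A: "vec.subspace A" and B: "vec.subspace B" and AB: "A \<subseteq> B"
  shows "card (subs (vec.dim A + 1) A B) * (CARD('a) ^ (vec.dim A + 1) - CARD('a) ^ vec.dim A)
         = CARD('a) ^ vec.dim B - CARD('a) ^ vec.dim A"
proof -
  let ?a = "vec.dim A"
  let ?F = "subs (?a + 1) A B"
  have U: "B - A = (\<Union>W\<in>?F. W - A)"
  proof (rule set_eqI)
    fix x
    show "x \<in> B - A \<longleftrightarrow> x \<in> (\<Union>W\<in>?F. W - A)"
    proof
      assume x: "x \<in> B - A"
      let ?W = "vec.span (insert x A)"
      have "?W \<in> ?F" unfolding subs_def
        using span_insert_dim[OF A, of x] x AB B vec.span_minimal[of "insert x A" B]
          vec.span_superset[of "insert x A"] by auto
      moreover have "x \<in> ?W - A" using x vec.span_superset[of "insert x A"] by auto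
      ultimately show "x \<in> (\<Union>W\<in>?F. W - A)" by blast
    next
      assume "x \<in> (\<Union>W\<in>?F. W - A)"
      then show "x \<in> B - A" unfolding subs_def by auto
    qed
  qed
  have disj: "\<forall>W1\<in>?F. \<forall>W2\<in>?F. W1 \<noteq> W2 \<longrightarrow> (W1 - A) \<inter> (W2 - A) = {}"
  proof (intro ballI impI)
    fix W1 W2 assume W1: "W1 \<in> ?F" and W2: "W2 \<in> ?F" and ne: "W1 \<noteq> W2"
    show "(W1 - A) \<inter> (W2 - A) = {}"
    proof (rule ccontr)
      assume "(W1 - A) \<inter> (W2 - A) \<noteq> {}"
      then obtain x where x1: "x \<in> W1" and x2: "x \<in> W2" and xA: "x \<notin> A" by blast
      let ?W = "vec.span (insert x A)"
      have dW: "vec.dim ?W = ?a + 1" using span_insert_dim[OF A xA] .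
      have "?W = W1"
        using W1 x1 dW vec.span_minimal[of "insert x A" W1] unfolding subs_def
        by (intro dim_eq_sub) auto
      moreover have "?W = W2"
        using W2 x2 dW vec.span_minimal[of "insert x A" W2] unfolding subs_def
        by (intro dim_eq_sub) auto
      ultimately show False using ne by simp
    qed
  qed
  have cW: "\<And>W. W \<in> ?F \<Longrightarrow> card (W - A) = CARD('a) ^ (?a + 1) - CARD('a) ^ ?a"
  proof -
    fix W assume "W \<in> ?F"
    then have W: "vec.subspace W" "vec.dim W = ?a + 1" "A \<subseteq> W" unfolding subs_def by auto
    then show "card (W - A) = CARD('a) ^ (?a + 1) - CARD('a) ^ ?a"
      using card_Diff_subset[of A W] card_subspace[OF A] card_subspace[OF W(1)] by simp
  qed
  have "card (B - A) = (\<Sum>W\<in>?F. card (W - A))"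
    unfolding U by (rule card_UN_disjoint) (use disj in auto)
  also have "\<dots> = (\<Sum>W\<in>?F. CARD('a) ^ (?a + 1) - CARD('a) ^ ?a)"
    using cW by (rule sum.cong[OF refl])
  also have "\<dots> = card ?F * (CARD('a) ^ (?a + 1) - CARD('a) ^ ?a)" by simp
  finally show ?thesis
    using card_Diff_subset[of A B] AB card_subspace[OF A] card_subspace[OF B] by simp
qed


lemma card_field_ge2: "CARD('a::{field,finite}) \<ge> 2"
proof -
  have "card {0::'a, 1} \<le> CARD('a)" by (rule card_mono) simp_all
  then show ?thesis by simp
qed

lemma double_count:
  assumes "finite X" "finite Y"
  shows "(\<Sum>x\<in>X. card {y\<in>Y. R x y}) = (\<Sum>y\<in>Y. card {x\<in>X. R x y})"
  using sum.swap_restrict[OF assms, of "\<lambda>_ _. (1::nat)" R] by simp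

lemma dim_zero: "vec.dim ({0} :: ('a::field ^'n::finite) set) = 0" by simp

lemma cancel_nat: "(c::nat) * d = e * d \<Longrightarrow> d > 0 \<Longrightarrow> c = e" by simp

lemma a1: "(q::nat) \<ge> 1 \<Longrightarrow> q^3 - 1 = (q^2+q+1)*(q-1)"
proof -
  assume "q \<ge> 1" then obtain r where "q = r + 1" by (metis le_add_diff_inverse2)
  then show ?thesis by (simp add: power2_eq_square power3_eq_cube algebra_simps)
qed
lemma a2: "(q::nat) \<ge> 1 \<Longrightarrow> q^2 - 1 = (q+1)*(q-1)"
proof -
  assume "q \<ge> 1" then obtain r where "q = r + 1" by (metis le_add_diff_inverse2)
  then show ?thesis by (simp add: power2_eq_square power3_eq_cube algebra_simps)
qed
lemma a3: "(q::nat) \<ge> 1 \<Longrightarrow> q^3 - q = (q+1)*(q^2-q)"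
proof -
  assume "q \<ge> 1" then obtain r where "q = r + 1" by (metis le_add_diff_inverse2)
  then show ?thesis by (simp add: power2_eq_square power3_eq_cube algebra_simps)
qed

lemma c_lines_plane:
  fixes P :: "('a::{field,finite} ^'n::finite) set"
  assumes "vec.subspace P" "vec.dim P = 2"
  shows "card (subs 1 {0} P) = CARD('a) + 1"
proof -
  let ?q = "CARD('a)"
  have q: "?q \<ge> 2" by (rule card_field_ge2)
  have z: "{0} \<subseteq> P" using assms(1) vec.subspace_0 by blast
  have "card (subs 1 {0} P) * (?q - 1) = ?q ^ 2 - 1"
    using count_ext[OF vec.subspace_single_0 assms(1) z]
    by (simp only: dim_zero assms(2) power_0 power_one_right add_0)
  also have "\<dots> = (?q + 1) * (?q - 1)" using q a2 by simp
  finally show ?thesis by (rule cancel_nat) (use q in simp)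
qed

lemma c_planes_line:
  fixes m V :: "('a::{field,finite} ^'n::finite) set"
  assumes "vec.subspace m" "vec.dim m = 1" "vec.subspace V" "vec.dim V = 3" "m \<subseteq> V"
  shows "card (subs 2 m V) = CARD('a) + 1"
proof -
  let ?q = "CARD('a)"
  have q: "?q \<ge> 2" by (rule card_field_ge2)
  have "card (subs 2 m V) * (?q ^ 2 - ?q) = ?q ^ 3 - ?q"
    using count_ext[OF assms(1,3,5)]
    by (simp only: assms(2,4) power_one_right one_add_one)
  also have "\<dots> = (?q + 1) * (?q ^ 2 - ?q)" using q a3 by simp
  finally show ?thesis
    by (rule cancel_nat) (use q in \<open>simp add: power2_eq_square\<close>)
qed

lemma c_lines_3:
  fixes V :: "('a::{field,finite} ^'n::finite) set"
  assumes "vec.subspace V" "vec.dim V = 3"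
  shows "card (subs 1 {0} V) = CARD('a)^2 + CARD('a) + 1"
proof -
  let ?q = "CARD('a)"
  have q: "?q \<ge> 2" by (rule card_field_ge2)
  have z: "{0} \<subseteq> V" using assms(1) vec.subspace_0 by blast
  have "card (subs 1 {0} V) * (?q - 1) = ?q ^ 3 - 1"
    using count_ext[OF vec.subspace_single_0 assms(1) z]
    by (simp only: dim_zero assms(2) power_0 power_one_right add_0)
  also have "\<dots> = (?q^2 + ?q + 1) * (?q - 1)" using q a1 by simp
  finally show ?thesis by (rule cancel_nat) (use q in simp)
qed


lemma subs_mem:
  "W \<in> subs k A B \<longleftrightarrow> vec.subspace W \<and> vec.dim W = k \<and> A \<subseteq> W \<and> W \<subseteq> B"
  by (simp add: subs_def)

lemma c_planes_3:
  fixes V :: "('a::{field,finite} ^'n::finite) set"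
  assumes V: "vec.subspace V" "vec.dim V = 3"
  shows "card (subs 2 {0} V) = CARD('a)^2 + CARD('a) + 1"
proof -
  let ?L = "subs 1 {0} V" and ?Pl = "subs 2 {0} V"
  have e1: "\<And>m. m \<in> ?L \<Longrightarrow> {P\<in>?Pl. m \<subseteq> P} = subs 2 m V"
    unfolding subs_def using vec.subspace_0 by blast
  have e2: "\<And>P. P \<in> ?Pl \<Longrightarrow> {m\<in>?L. m \<subseteq> P} = subs 1 {0} P"
    unfolding subs_def by blast
  have "(\<Sum>m\<in>?L. card {P\<in>?Pl. m \<subseteq> P}) = (\<Sum>P\<in>?Pl. card {m\<in>?L. m \<subseteq> P})"
    by (rule double_count) simp_all
  also have "(\<Sum>m\<in>?L. card {P\<in>?Pl. m \<subseteq> P}) = (\<Sum>m\<in>?L. CARD('a) + 1)"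
  proof (rule sum.cong[OF refl])
    fix m assume m: "m \<in> ?L"
    then show "card {P\<in>?Pl. m \<subseteq> P} = CARD('a) + 1"
      unfolding e1[OF m] using c_planes_line[of m V] V by (simp add: subs_mem)
  qed
  also have "(\<Sum>P\<in>?Pl. card {m\<in>?L. m \<subseteq> P}) = (\<Sum>P\<in>?Pl. CARD('a) + 1)"
  proof (rule sum.cong[OF refl])
    fix P assume P: "P \<in> ?Pl"
    then show "card {m\<in>?L. m \<subseteq> P} = CARD('a) + 1"
      unfolding e2[OF P] using c_lines_plane[of P] by (simp add: subs_mem)
  qed
  finally have "card ?L * (CARD('a) + 1) = card ?Pl * (CARD('a) + 1)" by simp
  then have "card ?L = card ?Pl" by (rule cancel_nat) simp
  then show ?thesis using c_lines_3[OF V] by simp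
qed


lemma dim_univ: "vec.dim (UNIV :: ('a::field ^'n::finite) set) = CARD('n)"
  by (simp add: card_cart_basis)

lemma c_K:
  fixes P :: "('a::{field,finite} ^'n::finite) set"
  assumes "vec.subspace P" "vec.dim P = 2"
  shows "card (subs 3 P UNIV) * (CARD('a)^3 - CARD('a)^2) = CARD('a)^CARD('n) - CARD('a)^2"
proof -
  have t: "(2::nat) + 1 = 3" by simp
  show ?thesis using count_ext[OF assms(1) vec.subspace_UNIV subset_UNIV]
    by (simp only: assms(2) dim_univ t)
qed

definition psum :: "('a::field ^'n::finite) set \<Rightarrow> ('a ^'n) set \<Rightarrow> ('a ^'n) set" where
  "psum P Q = {x + y |x y. x \<in> P \<and> y \<in> Q}"

lemma psum_props:
  fixes P Q :: "('a::field ^'n::finite) set"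
  assumes "vec.subspace P" "vec.subspace Q"
  shows "vec.subspace (psum P Q)" "P \<subseteq> psum P Q" "Q \<subseteq> psum P Q"
    "vec.dim (psum P Q) + vec.dim (P \<inter> Q) = vec.dim P + vec.dim Q"
proof -
  show "vec.subspace (psum P Q)" unfolding psum_def by (rule vec.subspace_sums[OF assms])
  show "P \<subseteq> psum P Q"
  proof
    fix x assume "x \<in> P"
    moreover have "x = x + 0" by simp
    ultimately show "x \<in> psum P Q" unfolding psum_def using vec.subspace_0[OF assms(2)] by blast
  qed
  show "Q \<subseteq> psum P Q"
  proof
    fix x assume "x \<in> Q"
    moreover have "x = 0 + x" by simp
    ultimately show "x \<in> psum P Q" unfolding psum_def using vec.subspace_0[OF assms(1)] by blast
  qed
  show "vec.dim (psum P Q) + vec.dim (P \<inter> Q) = vec.dim P + vec.dim Q"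
    unfolding psum_def by (rule vec.dim_sums_Int[OF assms])
qed

lemma psum_le:
  fixes P Q W :: "('a::field ^'n::finite) set"
  assumes "vec.subspace W" "P \<subseteq> W" "Q \<subseteq> W"
  shows "psum P Q \<subseteq> W"
  unfolding psum_def using assms vec.subspace_add by blast

lemma planes_meet:
  fixes P Q W :: "('a::field ^'n::finite) set"
  assumes "vec.subspace P" "vec.subspace Q" "vec.subspace W" "vec.dim P = 2" "vec.dim Q = 2"
    "P \<subseteq> W" "Q \<subseteq> W" "vec.dim W = 3"
  shows "vec.dim (P \<inter> Q) \<ge> 1"
proof -
  have "vec.dim (psum P Q) \<le> 3" using vec.dim_subset[OF psum_le[OF assms(3,6,7)]] assms(8) by simp
  then show ?thesis using psum_props(4)[OF assms(1,2)] assms(4,5) by simp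
qed

lemma nz_of_dim:
  fixes X :: "('a::field ^'n::finite) set"
  assumes "vec.dim X \<ge> 1"
  obtains x where "x \<in> X" "x \<noteq> 0"
proof -
  have "\<not> X \<subseteq> {0}"
  proof
    assume "X \<subseteq> {0}"
    then have "vec.dim X = 0" by (rule vec.dim_eq_0[THEN iffD2])
    then show False using assms by linarith
  qed
  then show ?thesis using that by blast
qed

lemma dim_of_nz:
  fixes X :: "('a::field ^'n::finite) set"
  assumes "x \<in> X" "x \<noteq> 0"
  shows "vec.dim X \<ge> 1"
  using vec.dim_subset[of "{x}" X] assms by simp

lemma dim_le_eq:
  fixes X Y :: "('a::field ^'n::finite) set"
  assumes "vec.subspace X" "vec.subspace Y" "X \<subseteq> Y" "vec.dim Y \<le> vec.dim X"
  shows "X = Y"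
  using vec.subspace_dim_equal[OF assms] .

lemma arith6:
  assumes q: "(q::nat) \<ge> 2" and n: "n \<ge> 6"
  shows "(q+1)*(q+1)*(q^3 - q^2) < q^n - q^2"
proof -
  obtain r where r: "q = r + 1" using q by (metis le_add_diff_inverse2 one_le_numeral order_trans)
  have r1: "r \<ge> 1" using q r by simp
  have e1: "q^3 - q^2 = q*q*r" unfolding r
    by (simp add: power2_eq_square power3_eq_cube algebra_simps)
  have e2: "((r+1)*(r+1)+1)*((r+2)*r) + 1 = (r+1)*(r+1)*((r+1)*(r+1))"
    by (simp add: algebra_simps)
  have h1: "r+2 < (r+1)*(r+1)+1" using r1 by (simp add: algebra_simps)
  have pos: "(r+2)*r > 0" using r1 by simp
  have h2: "(r+2)*((r+2)*r) < ((r+1)*(r+1)+1)*((r+2)*r)"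
    by (rule mult_strict_right_mono[OF h1 pos])
  have h3: "(q+1)*(q+1)*r + 1 < q*q*(q*q)"
    using h2 e2 unfolding r by (simp add: algebra_simps)
  have "(q+1)*(q+1)*(q^3 - q^2) + q^2 = q*q*((q+1)*(q+1)*r + 1)"
    unfolding e1 by (simp add: power2_eq_square algebra_simps)
  also have "\<dots> < q*q*(q*q*(q*q))" by (rule mult_strict_left_mono[OF h3]) (use q in simp)
  also have "\<dots> = q^6" by (simp add: power_def numeral_eq_Suc)
  also have "\<dots> \<le> q^n" using q n by (intro power_increasing) auto
  finally show ?thesis by linarith
qed


definition Kf :: "nat \<Rightarrow> nat \<Rightarrow> nat" where
  "Kf q n = (q^n - q^2) div (q^3 - q^2)"

locale spr =
  fixes S :: "('a::{field,finite} ^'n::finite) set set"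
  assumes spread: "spread3 S" and n6: "CARD('n) \<ge> 6"
begin

lemma S_sub: "V \<in> S \<Longrightarrow> vec.subspace V \<and> vec.dim V = 3"
  using spread unfolding spread3_def ksubspaces_def by auto

lemma S_cover: "x \<noteq> 0 \<Longrightarrow> \<exists>V\<in>S. x \<in> V"
  using spread unfolding spread3_def by blast

lemma S_meet: "V1 \<in> S \<Longrightarrow> V2 \<in> S \<Longrightarrow> x \<in> V1 \<Longrightarrow> x \<in> V2 \<Longrightarrow> x \<noteq> 0 \<Longrightarrow> V1 = V2"
  using spread unfolding spread3_def by blast

lemma S_meet_dim:
  assumes "V1 \<in> S" "V2 \<in> S" "X \<subseteq> V1" "X \<subseteq> V2" "vec.dim X \<ge> 1"
  shows "V1 = V2"
proof -
  obtain x where "x \<in> X" "x \<noteq> 0" using nz_of_dim[OF assms(5)] by blast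
  then show ?thesis using S_meet[OF assms(1,2)] assms(3,4) by blast
qed

lemma line_in:
  fixes m V :: "('a ^'n) set"
  assumes "vec.subspace m" "vec.dim m = 1" "x \<in> m" "x \<noteq> 0" "x \<in> V" "vec.subspace V"
  shows "m \<subseteq> V"
proof -
  have "vec.dim (m \<inter> V) \<ge> 1" using dim_of_nz[of x "m \<inter> V"] assms by simp
  then have "m \<inter> V = m"
    using assms(2) by (intro dim_le_eq vec.subspace_inter assms(1,6)) auto
  then show ?thesis by blast
qed

definition sp :: "('a ^'n) set \<Rightarrow> ('a ^'n) set" where
  "sp m = (THE V. V \<in> S \<and> m \<subseteq> V)"

lemma sp_ex1:
  assumes "vec.subspace m" "vec.dim m = 1"
  shows "\<exists>!V. V \<in> S \<and> m \<subseteq> V"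
proof -
  obtain x where x: "x \<in> m" "x \<noteq> 0" using nz_of_dim[of m] assms(2) by auto
  obtain V where V: "V \<in> S" "x \<in> V" using S_cover[OF x(2)] by blast
  have "m \<subseteq> V" using line_in[OF assms x V(2)] S_sub[OF V(1)] by blast
  moreover have "\<And>V'. V' \<in> S \<Longrightarrow> m \<subseteq> V' \<Longrightarrow> V' = V"
    using S_meet[OF _ V(1) _ V(2) x(2)] x(1) by blast
  ultimately show ?thesis using V(1) by blast
qed

lemma sp:
  assumes "vec.subspace m" "vec.dim m = 1"
  shows "sp m \<in> S" "m \<subseteq> sp m"
  using theI'[OF sp_ex1[OF assms]] unfolding sp_def by auto

lemma sp_unique:
  assumes "vec.subspace m" "vec.dim m = 1" "V \<in> S" "m \<subseteq> V"
  shows "sp m = V"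
  using sp_ex1[OF assms(1,2)] sp[OF assms(1,2)] assms(3,4) by blast

lemma notS_dim:
  assumes "vec.subspace U" "vec.dim U = 3" "U \<notin> S" "V \<in> S"
  shows "vec.dim (U \<inter> V) \<le> 2"
proof (rule ccontr)
  assume "\<not> vec.dim (U \<inter> V) \<le> 2"
  moreover have "vec.dim (U \<inter> V) \<le> vec.dim U" by (rule vec.dim_subset) blast
  ultimately have d: "vec.dim (U \<inter> V) = 3" using assms(2) by simp
  have sV: "vec.subspace V" "vec.dim V = 3" using S_sub[OF assms(4)] by auto
  have "U \<inter> V = U" using d assms(2) by (intro dim_le_eq vec.subspace_inter assms(1) sV(1)) auto
  moreover have "U \<inter> V = V" using d sV by (intro dim_le_eq vec.subspace_inter assms(1) sV(1)) auto
  ultimately show False using assms(3,4) by auto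
qed

lemma uniq2:
  assumes "vec.subspace W" "vec.dim W = 3" "V1 \<in> S" "V2 \<in> S"
    "vec.dim (W \<inter> V1) = 2" "vec.dim (W \<inter> V2) = 2"
  shows "V1 = V2"
proof -
  have s1: "vec.subspace V1" and s2: "vec.subspace V2" using S_sub assms(3,4) by auto
  have "vec.dim ((W \<inter> V1) \<inter> (W \<inter> V2)) \<ge> 1"
    by (rule planes_meet[where W=W]) (use assms s1 s2 in \<open>auto intro: vec.subspace_inter\<close>)
  then show ?thesis by (rule S_meet_dim[OF assms(3,4), rotated 2]) auto
qed


lemma ks_mem: "U \<in> ksubspaces k \<longleftrightarrow> vec.subspace U \<and> vec.dim U = k"
  by (simp add: ksubspaces_def)

definition T1 where "T1 = {U\<in>ksubspaces 3. U \<notin> S \<and> (\<exists>V\<in>S. vec.dim (U \<inter> V) = 2)}"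
definition T2 where "T2 = ksubspaces 3 - S - T1"

lemma per_m:
  assumes U: "U \<in> ksubspaces 3" "U \<notin> S" and m: "vec.subspace m" "vec.dim m = 1" "m \<subseteq> U"
  shows "card {Q\<in>subs 2 m (sp m). \<not> Q \<subseteq> U} =
           (if vec.dim (U \<inter> sp m) = 2 then CARD('a) else CARD('a) + 1)"
proof -
  have sU: "vec.subspace U" "vec.dim U = 3" using U(1) by (auto simp: ks_mem)
  have spm: "sp m \<in> S" "m \<subseteq> sp m" using sp[OF m(1,2)] by auto
  have sV: "vec.subspace (sp m)" "vec.dim (sp m) = 3" using S_sub[OF spm(1)] by auto
  have le2: "vec.dim (U \<inter> sp m) \<le> 2" using notS_dim[OF sU U(2) spm(1)] .
  have cq: "card (subs 2 m (sp m)) = CARD('a) + 1"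
    using c_planes_line[OF m(1,2) sV spm(2)] .
  show ?thesis
  proof (cases "vec.dim (U \<inter> sp m) = 2")
    case True
    have mem: "U \<inter> sp m \<in> subs 2 m (sp m)"
      using True m(3) spm(2) sU sV by (auto simp: subs_mem intro: vec.subspace_inter)
    have "{Q\<in>subs 2 m (sp m). \<not> Q \<subseteq> U} = subs 2 m (sp m) - {U \<inter> sp m}"
    proof (rule set_eqI)
      fix Q
      show "Q \<in> {Q\<in>subs 2 m (sp m). \<not> Q \<subseteq> U} \<longleftrightarrow> Q \<in> subs 2 m (sp m) - {U \<inter> sp m}"
      proof
        assume "Q \<in> subs 2 m (sp m) - {U \<inter> sp m}"
        then have Q: "vec.subspace Q" "vec.dim Q = 2" "Q \<subseteq> sp m" "Q \<noteq> U \<inter> sp m"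
          by (auto simp: subs_mem)
        show "Q \<in> {Q\<in>subs 2 m (sp m). \<not> Q \<subseteq> U}"
        proof (simp, intro conjI)
          show "Q \<in> subs 2 m (sp m)" using \<open>Q \<in> subs 2 m (sp m) - {U \<inter> sp m}\<close> by simp
          show "\<not> Q \<subseteq> U"
          proof
            assume "Q \<subseteq> U"
            then have "Q = U \<inter> sp m" using Q True sU sV
              by (intro dim_le_eq vec.subspace_inter) auto
            then show False using Q(4) by simp
          qed
        qed
      next
        assume "Q \<in> {Q\<in>subs 2 m (sp m). \<not> Q \<subseteq> U}"
        then show "Q \<in> subs 2 m (sp m) - {U \<inter> sp m}" by auto
      qed
    qed
    then show ?thesis using True cq mem by (simp add: card_Diff_singleton)
  next
    case False
    have "{Q\<in>subs 2 m (sp m). \<not> Q \<subseteq> U} = subs 2 m (sp m)"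
    proof (rule set_eqI, rule iffI)
      fix Q assume Q: "Q \<in> subs 2 m (sp m)"
      have "\<not> Q \<subseteq> U"
      proof
        assume "Q \<subseteq> U"
        then have "Q \<subseteq> U \<inter> sp m" using Q by (auto simp: subs_mem)
        then have "vec.dim Q \<le> vec.dim (U \<inter> sp m)" by (rule vec.dim_subset)
        then show False using Q le2 False by (auto simp: subs_mem)
      qed
      then show "Q \<in> {Q\<in>subs 2 m (sp m). \<not> Q \<subseteq> U}" using Q by simp
    qed simp
    then show ?thesis using False cq by simp
  qed
qed

lemma inter_plane:
  fixes U W P :: "('a ^'n) set"
  assumes "U \<in> ksubspaces 3" "W \<in> ksubspaces 3" "P \<in> subs 2 {0} U" "P \<subseteq> W" "W \<noteq> U"
  shows "U \<inter> W = P"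
proof -
  have sU: "vec.subspace U" "vec.dim U = 3" and sW: "vec.subspace W" "vec.dim W = 3"
    and sP: "vec.subspace P" "vec.dim P = 2" "P \<subseteq> U"
    using assms by (auto simp: ks_mem subs_mem)
  have sI: "vec.subspace (U \<inter> W)" using sU sW vec.subspace_inter by blast
  have "vec.dim (U \<inter> W) \<le> 2"
  proof (rule ccontr)
    assume "\<not> vec.dim (U \<inter> W) \<le> 2"
    then have d: "vec.dim (U \<inter> W) \<ge> 3" by simp
    have "U \<inter> W = U" using d sU sI by (intro dim_le_eq) auto
    moreover have "U \<inter> W = W" using d sW sI by (intro dim_le_eq) auto
    ultimately show False using assms(5) by simp
  qed
  then show ?thesis using sP sI assms(4) by (intro dim_le_eq[symmetric]) auto
qed


lemma nbr_sum:
  fixes U :: "('a ^'n) set"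
  assumes U: "U \<in> ksubspaces 3"
  shows "card {W\<in>ksubspaces 3. vec.dim (U \<inter> W) = 2 \<and> W \<in> X} =
         (\<Sum>P\<in>subs 2 {0} U. card {W\<in>ksubspaces 3. P \<subseteq> W \<and> W \<noteq> U \<and> W \<in> X})"
proof -
  have sU: "vec.subspace U" "vec.dim U = 3" using U by (auto simp: ks_mem)
  let ?G = "\<lambda>P. {W\<in>ksubspaces 3. P \<subseteq> W \<and> W \<noteq> U \<and> W \<in> X}"
  have eq: "{W\<in>ksubspaces 3. vec.dim (U \<inter> W) = 2 \<and> W \<in> X} = (\<Union>P\<in>subs 2 {0} U. ?G P)"
  proof (rule set_eqI, rule iffI)
    fix W assume W: "W \<in> {W\<in>ksubspaces 3. vec.dim (U \<inter> W) = 2 \<and> W \<in> X}"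
    have sW: "vec.subspace W" using W by (auto simp: ks_mem)
    have P: "U \<inter> W \<in> subs 2 {0} U"
      using W sU sW vec.subspace_0[of "U \<inter> W"] by (auto simp: subs_mem intro: vec.subspace_inter)
    have "W \<noteq> U"
    proof
      assume "W = U" then show False using W sU by simp
    qed
    then have "W \<in> ?G (U \<inter> W)" using W by auto
    then show "W \<in> (\<Union>P\<in>subs 2 {0} U. ?G P)" using P by blast
  next
    fix W assume "W \<in> (\<Union>P\<in>subs 2 {0} U. ?G P)"
    then obtain P where P: "P \<in> subs 2 {0} U" and W: "W \<in> ?G P" by blast
    have "U \<inter> W = P" using inter_plane[of U W P] U P W by auto
    then show "W \<in> {W\<in>ksubspaces 3. vec.dim (U \<inter> W) = 2 \<and> W \<in> X}"
      using W P by (auto simp: subs_mem)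
  qed
  have disj: "\<forall>P1\<in>subs 2 {0} U. \<forall>P2\<in>subs 2 {0} U. P1 \<noteq> P2 \<longrightarrow> ?G P1 \<inter> ?G P2 = {}"
  proof (intro ballI impI)
    fix P1 P2 assume P1: "P1 \<in> subs 2 {0} U" and P2: "P2 \<in> subs 2 {0} U" and ne: "P1 \<noteq> P2"
    show "?G P1 \<inter> ?G P2 = {}"
    proof (rule ccontr)
      assume "?G P1 \<inter> ?G P2 \<noteq> {}"
      then obtain W where W1: "W \<in> ?G P1" and W2: "W \<in> ?G P2" by blast
      have "U \<inter> W = P1" using inter_plane[of U W P1] U P1 W1 by auto
      moreover have "U \<inter> W = P2" using inter_plane[of U W P2] U P2 W2 by auto
      ultimately show False using ne by simp
    qed
  qed
  show ?thesis unfolding eq by (rule card_UN_disjoint) (use disj in auto)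
qed


lemma key:
  fixes U P :: "('a ^'n) set"
  assumes U: "U \<in> ksubspaces 3" "U \<notin> S" and P: "P \<in> subs 2 {0} U"
    and nP: "\<forall>V\<in>S. \<not> P \<subseteq> V"
  shows "card {W\<in>ksubspaces 3. P \<subseteq> W \<and> W \<noteq> U \<and> W \<in> T1} =
         (\<Sum>m\<in>subs 1 {0} P. card {Q\<in>subs 2 m (sp m). \<not> Q \<subseteq> U})"
proof -
  have sU: "vec.subspace U" "vec.dim U = 3" using U by (auto simp: ks_mem)
  have sP: "vec.subspace P" "vec.dim P = 2" "P \<subseteq> U" using P by (auto simp: subs_mem)
  let ?A = "SIGMA m:subs 1 {0} P. {Q\<in>subs 2 m (sp m). \<not> Q \<subseteq> U}"
  let ?B = "{W\<in>ksubspaces 3. P \<subseteq> W \<and> W \<noteq> U \<and> W \<in> T1}"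
  let ?f = "\<lambda>(m, Q). psum P Q"
  have pr: "psum P Q \<in> ?B \<and> psum P Q \<inter> sp m = Q \<and> P \<inter> Q = m"
    if mQ: "(m, Q) \<in> ?A" for m Q
  proof -
    have m: "vec.subspace m" "vec.dim m = 1" "m \<subseteq> P" using mQ by (auto simp: subs_mem)
    have Q: "vec.subspace Q" "vec.dim Q = 2" "m \<subseteq> Q" "Q \<subseteq> sp m" "\<not> Q \<subseteq> U"
      using mQ by (auto simp: subs_mem)
    have spm: "sp m \<in> S" using sp[OF m(1,2)] by auto
    have sV: "vec.subspace (sp m)" "vec.dim (sp m) = 3" using S_sub[OF spm] by auto
    have sPQ: "vec.subspace (P \<inter> Q)" using sP Q vec.subspace_inter by blast
    have "vec.dim (P \<inter> Q) \<le> 1"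
    proof (rule ccontr)
      assume "\<not> vec.dim (P \<inter> Q) \<le> 1"
      then have "P \<inter> Q = P" using sP sPQ by (intro dim_le_eq) auto
      then have "P \<subseteq> sp m" using Q(4) by blast
      then show False using nP spm by blast
    qed
    then have PQ: "P \<inter> Q = m" using m Q sPQ by (intro dim_le_eq[symmetric]) auto
    let ?W = "psum P Q"
    have sW: "vec.subspace ?W" "P \<subseteq> ?W" "Q \<subseteq> ?W"
      using psum_props[OF sP(1) Q(1)] by auto
    have dW: "vec.dim ?W = 3" using psum_props(4)[OF sP(1) Q(1)] PQ m(2) sP(2) Q(2) by simp
    have WU: "?W \<noteq> U" using sW(3) Q(5) by blast
    have WS: "?W \<notin> S" using sW(2) nP by blast
    have sWV: "vec.subspace (?W \<inter> sp m)" using sW(1) sV(1) vec.subspace_inter by blast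
    have QW: "Q \<subseteq> ?W \<inter> sp m" using sW(3) Q(4) by blast
    have "vec.dim (?W \<inter> sp m) \<le> 2" using notS_dim[OF sW(1) dW WS spm] .
    then have eqQ: "?W \<inter> sp m = Q" using QW Q sWV by (intro dim_le_eq[symmetric]) auto
    have "vec.dim (?W \<inter> sp m) = 2" using eqQ Q(2) by simp
    moreover have "?W \<in> ksubspaces 3" using sW(1) dW by (simp add: ks_mem)
    ultimately have "?W \<in> T1" unfolding T1_def using WS spm by blast
    then have "?W \<in> ?B" using sW dW WU by (auto simp: ks_mem)
    then show ?thesis using eqQ PQ by simp
  qed
  have inj: "inj_on ?f ?A"
  proof (rule inj_onI)
    fix x y assume x: "x \<in> ?A" and y: "y \<in> ?A" and eq: "?f x = ?f y"
    obtain m Q where xe: "x = (m, Q)" by (cases x)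
    obtain m' Q' where ye: "y = (m', Q')" by (cases y)
    have x': "(m, Q) \<in> ?A" using x xe by simp
    have y': "(m', Q') \<in> ?A" using y ye by simp
    note X = pr[OF x']
    note Y = pr[OF y']
    have W: "psum P Q = psum P Q'" using eq xe ye by simp
    have m1: "vec.subspace m" "vec.dim m = 1" using x' by (simp_all add: subs_mem)
    have m2: "vec.subspace m'" "vec.dim m' = 1" using y' by (simp_all add: subs_mem)
    have dQ: "vec.dim Q = 2" "vec.dim Q' = 2" using x' y' by (simp_all add: subs_mem)
    have X1: "psum P Q \<in> ksubspaces 3" using X by blast
    have sW: "vec.subspace (psum P Q)" "vec.dim (psum P Q) = 3"
      using X1 by (simp_all add: ks_mem)
    have X2: "psum P Q \<inter> sp m = Q" using X by blast
    have Y2: "psum P Q \<inter> sp m' = Q'" using Y W by metis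
    have X3: "P \<inter> Q = m" using X by blast
    have Y3: "P \<inter> Q' = m'" using Y by blast
    have d1: "vec.dim (psum P Q \<inter> sp m) = 2" by (subst X2) (rule dQ(1))
    have d2: "vec.dim (psum P Q \<inter> sp m') = 2" by (subst Y2) (rule dQ(2))
    have "sp m = sp m'"
      by (rule uniq2[OF sW sp(1)[OF m1] sp(1)[OF m2] d1 d2])
    then have "Q = Q'" using X2 Y2 by metis
    then have "m = m'" using X3 Y3 by metis
    then show "x = y" using \<open>Q = Q'\<close> xe ye by simp
  qed
  have img: "?f ` ?A = ?B"
  proof (rule set_eqI, rule iffI)
    fix W assume "W \<in> ?f ` ?A"
    then show "W \<in> ?B" using pr by auto
  next
    fix W assume W: "W \<in> ?B"
    have sW: "vec.subspace W" "vec.dim W = 3" "P \<subseteq> W" "W \<noteq> U" using W by (auto simp: ks_mem)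
    obtain V where V: "V \<in> S" "vec.dim (W \<inter> V) = 2" using W unfolding T1_def by auto
    have sV: "vec.subspace V" using S_sub[OF V(1)] by auto
    define Q where "Q = W \<inter> V"
    have sQ: "vec.subspace Q" "vec.dim Q = 2" "Q \<subseteq> W" "Q \<subseteq> V"
      unfolding Q_def using V sW sV vec.subspace_inter by auto
    define m where "m = P \<inter> Q"
    have sm: "vec.subspace m" "m \<subseteq> P" "m \<subseteq> Q" unfolding m_def using sP sQ vec.subspace_inter by auto
    have d1: "vec.dim m \<ge> 1" unfolding m_def
      by (rule planes_meet[where W=W]) (use sP sQ sW in auto)
    have d2: "vec.dim m \<le> 1"
    proof (rule ccontr)
      assume "\<not> vec.dim m \<le> 1"
      then have "m = P" using sm sP by (intro dim_le_eq) auto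
      then have "P \<subseteq> V" using sm sQ by blast
      then show False using nP V(1) by blast
    qed
    have dm: "vec.dim m = 1" using d1 d2 by simp
    have spm: "sp m = V" using sp_unique[OF sm(1) dm V(1)] sm sQ by blast
    have UW: "U \<inter> W = P" using inter_plane[of U W P] U P sW W by (auto simp: ks_mem)
    have nQU: "\<not> Q \<subseteq> U"
    proof
      assume "Q \<subseteq> U"
      then have "Q \<subseteq> P" using UW sQ(3) by blast
      then have "Q = P" using sQ sP by (intro dim_le_eq) auto
      then show False using sQ(4) nP V(1) by blast
    qed
    have mem: "(m, Q) \<in> ?A"
      using sm dm sQ spm nQU vec.subspace_0[OF sm(1)] by (auto simp: subs_mem)
    have "vec.dim (psum P Q) = 3"
      using psum_props(4)[OF sP(1) sQ(1)] dm sP(2) sQ(2) by (simp add: m_def)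
    then have "psum P Q = W"
      using psum_le[OF sW(1) sW(3) sQ(3)] psum_props(1)[OF sP(1) sQ(1)] sW
      by (intro dim_le_eq) auto
    then have "W = ?f (m, Q)" by simp
    then show "W \<in> ?f ` ?A" using mem by (rule image_eqI)
  qed
  have "card ?B = card ?A" using bij_betw_same_card[of ?f ?A ?B] inj img
    unfolding bij_betw_def by simp
  also have "\<dots> = (\<Sum>m\<in>subs 1 {0} P. card {Q\<in>subs 2 m (sp m). \<not> Q \<subseteq> U})"
    by (rule card_SigmaI) simp_all
  finally show ?thesis .
qed



lemma cK:
  fixes P :: "('a ^'n) set"
  assumes "vec.subspace P" "vec.dim P = 2"
  shows "card (subs 3 P UNIV) = Kf CARD('a) CARD('n)"
proof -
  have q: "CARD('a) \<ge> 2" by (rule card_field_ge2)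
  have pos: "CARD('a)^3 - CARD('a)^2 > 0"
  proof -
    have "CARD('a)^2 * 1 < CARD('a)^2 * CARD('a)" using q by simp
    then show ?thesis by (simp add: power2_eq_square power3_eq_cube)
  qed
  show ?thesis using c_K[OF assms] pos unfolding Kf_def by (metis nonzero_mult_div_cancel_right less_not_refl2)
qed

lemma gset_all:
  fixes U P :: "('a ^'n) set"
  assumes U: "U \<in> ksubspaces 3" and P: "P \<in> subs 2 {0} U"
  shows "card {W\<in>ksubspaces 3. P \<subseteq> W \<and> W \<noteq> U} = Kf CARD('a) CARD('n) - 1"
proof -
  have sP: "vec.subspace P" "vec.dim P = 2" "P \<subseteq> U" using P by (auto simp: subs_mem)
  have "{W\<in>ksubspaces 3. P \<subseteq> W \<and> W \<noteq> U} = subs 3 P UNIV - {U}"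
    by (auto simp: subs_mem ks_mem)
  moreover have "U \<in> subs 3 P UNIV" using U sP by (auto simp: subs_mem ks_mem)
  ultimately show ?thesis using cK[OF sP(1,2)] by (simp add: card_Diff_singleton)
qed

lemma deg:
  fixes U :: "('a ^'n) set"
  assumes U: "U \<in> ksubspaces 3"
  shows "card {W\<in>ksubspaces 3. vec.dim (U \<inter> W) = 2 \<and> W \<in> UNIV} =
     (CARD('a)^2 + CARD('a) + 1) * (Kf CARD('a) CARD('n) - 1)"
proof -
  have sU: "vec.subspace U" "vec.dim U = 3" using U by (auto simp: ks_mem)
  have "card {W\<in>ksubspaces 3. vec.dim (U \<inter> W) = 2 \<and> W \<in> UNIV} =
     (\<Sum>P\<in>subs 2 {0} U. card {W\<in>ksubspaces 3. P \<subseteq> W \<and> W \<noteq> U \<and> W \<in> UNIV})"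
    by (rule nbr_sum[OF U])
  also have "\<dots> = (\<Sum>P\<in>subs 2 {0} U. Kf CARD('a) CARD('n) - 1)"
    by (rule sum.cong[OF refl]) (use gset_all[OF U] in simp)
  also have "\<dots> = (CARD('a)^2 + CARD('a) + 1) * (Kf CARD('a) CARD('n) - 1)"
    using c_planes_3[OF sU] by simp
  finally show ?thesis .
qed


lemma T2_props:
  assumes "U \<in> T2"
  shows "U \<in> ksubspaces 3" "U \<notin> S" "\<And>V. V \<in> S \<Longrightarrow> vec.dim (U \<inter> V) \<noteq> 2"
  using assms unfolding T2_def T1_def by auto

lemma cnt_T2:
  fixes U :: "('a ^'n) set"
  assumes U: "U \<in> T2"
  shows "card {W\<in>ksubspaces 3. vec.dim (U \<inter> W) = 2 \<and> W \<in> T1} =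
     (CARD('a)^2 + CARD('a) + 1) * ((CARD('a) + 1) * (CARD('a) + 1))"
proof -
  note UT = T2_props[OF U]
  have sU: "vec.subspace U" "vec.dim U = 3" using UT(1) by (auto simp: ks_mem)
  have fP: "card {W\<in>ksubspaces 3. P \<subseteq> W \<and> W \<noteq> U \<and> W \<in> T1} = (CARD('a) + 1) * (CARD('a) + 1)"
    if P: "P \<in> subs 2 {0} U" for P
  proof -
    have sP: "vec.subspace P" "vec.dim P = 2" "P \<subseteq> U" using P by (auto simp: subs_mem)
    have nP: "\<forall>V\<in>S. \<not> P \<subseteq> V"
    proof (intro ballI notI)
      fix V assume V: "V \<in> S" and PV: "P \<subseteq> V"
      have "P \<subseteq> U \<inter> V" using PV sP by blast
      then have "vec.dim (U \<inter> V) \<ge> 2" using vec.dim_subset sP(2) by metis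
      moreover have "vec.dim (U \<inter> V) \<le> 2" using notS_dim[OF sU UT(2) V] .
      ultimately show False using UT(3)[OF V] by simp
    qed
    have "card {W\<in>ksubspaces 3. P \<subseteq> W \<and> W \<noteq> U \<and> W \<in> T1} =
         (\<Sum>m\<in>subs 1 {0} P. card {Q\<in>subs 2 m (sp m). \<not> Q \<subseteq> U})"
      by (rule key[OF UT(1,2) P nP])
    also have "\<dots> = (\<Sum>m\<in>subs 1 {0} P. CARD('a) + 1)"
    proof (rule sum.cong[OF refl])
      fix m assume m: "m \<in> subs 1 {0} P"
      have sm: "vec.subspace m" "vec.dim m = 1" "m \<subseteq> U" using m sP by (auto simp: subs_mem)
      have "vec.dim (U \<inter> sp m) \<noteq> 2" using UT(3) sp(1)[OF sm(1,2)] by blast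
      then show "card {Q\<in>subs 2 m (sp m). \<not> Q \<subseteq> U} = CARD('a) + 1"
        using per_m[OF UT(1,2) sm] by simp
    qed
    also have "\<dots> = (CARD('a) + 1) * (CARD('a) + 1)" using c_lines_plane[OF sP(1,2)] by simp
    finally show ?thesis .
  qed
  have "card {W\<in>ksubspaces 3. vec.dim (U \<inter> W) = 2 \<and> W \<in> T1} =
     (\<Sum>P\<in>subs 2 {0} U. card {W\<in>ksubspaces 3. P \<subseteq> W \<and> W \<noteq> U \<and> W \<in> T1})"
    by (rule nbr_sum[OF UT(1)])
  also have "\<dots> = (\<Sum>P\<in>subs 2 {0} U. (CARD('a) + 1) * (CARD('a) + 1))"
    by (rule sum.cong[OF refl]) (rule fP)
  also have "\<dots> = (CARD('a)^2 + CARD('a) + 1) * ((CARD('a) + 1) * (CARD('a) + 1))"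
    using c_planes_3[OF sU] by simp
  finally show ?thesis .
qed

lemma T2_noS:
  assumes U: "U \<in> T2"
  shows "{W\<in>ksubspaces 3. vec.dim (U \<inter> W) = 2 \<and> W \<in> S} = {}"
  using T2_props[OF U] by auto

lemma S_noS:
  assumes U: "U \<in> S"
  shows "{W\<in>ksubspaces 3. vec.dim (U \<inter> W) = 2 \<and> W \<in> S} = {}"
proof (rule ccontr)
  assume "\<not> ?thesis"
  then obtain W where W: "W \<in> S" "vec.dim (U \<inter> W) = 2" by blast
  have "U = W" by (rule S_meet_dim[OF U W(1), of "U \<inter> W"]) (use W(2) in auto)
  then show False using W(2) S_sub[OF U] by simp
qed

lemma S_allT1:
  assumes U: "U \<in> S"
  shows "{W\<in>ksubspaces 3. vec.dim (U \<inter> W) = 2 \<and> W \<in> T1} =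
         {W\<in>ksubspaces 3. vec.dim (U \<inter> W) = 2 \<and> W \<in> UNIV}"
proof -
  have "W \<in> T1" if W: "W \<in> ksubspaces 3" "vec.dim (U \<inter> W) = 2" for W
  proof -
    have "W \<notin> S" using S_noS[OF U] W by blast
    moreover have "vec.dim (W \<inter> U) = 2" using W(2) by (simp add: Int_commute)
    ultimately show ?thesis unfolding T1_def using W(1) U by blast
  qed
  then show ?thesis by blast
qed


lemma T1_S:
  assumes U: "U \<in> T1" and V0: "V0 \<in> S" "vec.dim (U \<inter> V0) = 2"
  shows "{W\<in>ksubspaces 3. vec.dim (U \<inter> W) = 2 \<and> W \<in> S} = {V0}"
proof -
  have sU: "vec.subspace U" "vec.dim U = 3" using U unfolding T1_def by (auto simp: ks_mem)
  have "V0 \<in> ksubspaces 3" using S_sub[OF V0(1)] by (simp add: ks_mem)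
  moreover have "W = V0" if "W \<in> S" "vec.dim (U \<inter> W) = 2" for W
    using uniq2[OF sU that(1) V0(1) that(2) V0(2)] .
  ultimately show ?thesis using V0 by blast
qed

lemma cnt_T1:
  fixes U V0 :: "('a ^'n) set"
  assumes U: "U \<in> T1" and V0: "V0 \<in> S" "vec.dim (U \<inter> V0) = 2"
  shows "card {W\<in>ksubspaces 3. vec.dim (U \<inter> W) = 2 \<and> W \<in> S \<union> T1} =
     (Kf CARD('a) CARD('n) - 1) + (CARD('a)^2 + CARD('a)) * (CARD('a) * CARD('a) + 2 * CARD('a))"
proof -
  have U3: "U \<in> ksubspaces 3" and US: "U \<notin> S" using U unfolding T1_def by auto
  have sU: "vec.subspace U" "vec.dim U = 3" using U3 by (auto simp: ks_mem)
  have sV0: "vec.subspace V0" "vec.dim V0 = 3" using S_sub[OF V0(1)] by auto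
  define P0 where "P0 = U \<inter> V0"
  have P0: "P0 \<in> subs 2 {0} U" unfolding P0_def
    using V0(2) sU sV0 vec.subspace_inter[OF sU(1) sV0(1)] vec.subspace_0[OF sU(1)]
      vec.subspace_0[OF sV0(1)] by (auto simp: subs_mem)
  have sP0: "vec.subspace P0" "vec.dim P0 = 2" "P0 \<subseteq> U" "P0 \<subseteq> V0"
    using P0 by (auto simp: subs_mem P0_def)
  let ?G = "\<lambda>P. card {W\<in>ksubspaces 3. P \<subseteq> W \<and> W \<noteq> U \<and> W \<in> S \<union> T1}"
  have f0: "?G P0 = Kf CARD('a) CARD('n) - 1"
  proof -
    have "{W\<in>ksubspaces 3. P0 \<subseteq> W \<and> W \<noteq> U \<and> W \<in> S \<union> T1} =
          {W\<in>ksubspaces 3. P0 \<subseteq> W \<and> W \<noteq> U}"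
    proof -
      have "W \<in> S \<union> T1" if W: "W \<in> ksubspaces 3" "P0 \<subseteq> W" for W
      proof (cases "W \<in> S")
        case False
        have sW: "vec.subspace W" "vec.dim W = 3" using W by (auto simp: ks_mem)
        have "P0 \<subseteq> W \<inter> V0" using W sP0 by blast
        then have "vec.dim (W \<inter> V0) \<ge> 2" using vec.dim_subset sP0(2) by metis
        moreover have "vec.dim (W \<inter> V0) \<le> 2" using notS_dim[OF sW False V0(1)] .
        ultimately have "vec.dim (W \<inter> V0) = 2" by simp
        then show ?thesis unfolding T1_def using W(1) False V0(1) by blast
      qed simp
      then show ?thesis by blast
    qed
    then show ?thesis using gset_all[OF U3 P0] by simp
  qed
  have fP: "?G P = CARD('a) * CARD('a) + 2 * CARD('a)"
    if P: "P \<in> subs 2 {0} U - {P0}" for P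
  proof -
    have sP: "vec.subspace P" "vec.dim P = 2" "P \<subseteq> U" "P \<noteq> P0" using P by (auto simp: subs_mem)
    have nP: "\<forall>V\<in>S. \<not> P \<subseteq> V"
    proof (intro ballI notI)
      fix V assume V: "V \<in> S" and PV: "P \<subseteq> V"
      have "P \<subseteq> U \<inter> V" using PV sP by blast
      then have "vec.dim (U \<inter> V) \<ge> 2" using vec.dim_subset sP(2) by metis
      moreover have "vec.dim (U \<inter> V) \<le> 2" using notS_dim[OF sU US V] .
      ultimately have "V = V0" using uniq2[OF sU V V0(1) _ V0(2)] by simp
      then have "P \<subseteq> P0" using PV sP unfolding P0_def by blast
      then have "P = P0" using sP sP0 by (intro dim_le_eq) auto
      then show False using sP(4) by simp
    qed
    have eqset: "{W\<in>ksubspaces 3. P \<subseteq> W \<and> W \<noteq> U \<and> W \<in> S \<union> T1} =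
                 {W\<in>ksubspaces 3. P \<subseteq> W \<and> W \<noteq> U \<and> W \<in> T1}"
      using nP by blast
    define l where "l = P \<inter> P0"
    have sl: "vec.subspace l" "l \<subseteq> P" "l \<subseteq> V0" unfolding l_def
      using vec.subspace_inter[OF sP(1) sP0(1)] sP0 by auto
    have dl1: "vec.dim l \<ge> 1" unfolding l_def
      by (rule planes_meet[where W=U]) (use sP sP0 sU in auto)
    have dl2: "vec.dim l \<le> 1"
    proof (rule ccontr)
      assume "\<not> vec.dim l \<le> 1"
      then have "l = P" using sl sP by (intro dim_le_eq) auto
      then have "P \<subseteq> P0" unfolding l_def by blast
      then have "P = P0" using sP sP0 by (intro dim_le_eq) auto
      then show False using sP(4) by simp
    qed
    have dl: "vec.dim l = 1" using dl1 dl2 by simp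
    have lmem: "l \<in> subs 1 {0} P" using sl dl vec.subspace_0[OF sl(1)] by (auto simp: subs_mem)
    have splV: "sp l = V0" using sp_unique[OF sl(1) dl V0(1) sl(3)] .
    have fm: "card {Q\<in>subs 2 m (sp m). \<not> Q \<subseteq> U} = (if m = l then CARD('a) else CARD('a) + 1)"
      if m: "m \<in> subs 1 {0} P" for m
    proof -
      have sm: "vec.subspace m" "vec.dim m = 1" "m \<subseteq> P" using m by (auto simp: subs_mem)
      have smU: "m \<subseteq> U" using sm sP by blast
      have "vec.dim (U \<inter> sp m) = 2 \<longleftrightarrow> m = l"
      proof
        assume d: "vec.dim (U \<inter> sp m) = 2"
        have "sp m = V0" using uniq2[OF sU sp(1)[OF sm(1,2)] V0(1) d V0(2)] .
        then have "m \<subseteq> V0" using sp(2)[OF sm(1,2)] by simp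
        then have "m \<subseteq> l" using sm smU unfolding l_def P0_def by blast
        then show "m = l" using sm sl dl by (intro dim_le_eq) auto
      next
        assume "m = l"
        then show "vec.dim (U \<inter> sp m) = 2" using splV V0(2) by simp
      qed
      then show ?thesis using per_m[OF U3 US sm(1,2) smU] by simp
    qed
    have "?G P = (\<Sum>m\<in>subs 1 {0} P. card {Q\<in>subs 2 m (sp m). \<not> Q \<subseteq> U})"
      unfolding eqset by (rule key[OF U3 US _ nP]) (use P in simp)
    also have "\<dots> = (\<Sum>m\<in>subs 1 {0} P. (if m = l then CARD('a) else CARD('a) + 1))"
      by (rule sum.cong[OF refl]) (rule fm)
    also have "\<dots> = (if l = l then CARD('a) else CARD('a) + 1) + (\<Sum>m\<in>subs 1 {0} P - {l}. (if m = l then CARD('a) else CARD('a) + 1))"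
      by (rule sum.remove[OF _ lmem]) simp
    also have "(\<Sum>m\<in>subs 1 {0} P - {l}. (if m = l then CARD('a) else CARD('a) + 1)) =
               (\<Sum>m\<in>subs 1 {0} P - {l}. CARD('a) + 1)"
      by (rule sum.cong) auto
    also have "\<dots> = CARD('a) * (CARD('a) + 1)"
      using c_lines_plane[OF sP(1,2)] lmem by (simp add: card_Diff_singleton)
    finally show ?thesis by (simp add: algebra_simps)
  qed
  have "card {W\<in>ksubspaces 3. vec.dim (U \<inter> W) = 2 \<and> W \<in> S \<union> T1} = (\<Sum>P\<in>subs 2 {0} U. ?G P)"
    by (rule nbr_sum[OF U3])
  also have "\<dots> = ?G P0 + (\<Sum>P\<in>subs 2 {0} U - {P0}. ?G P)"
    by (rule sum.remove[OF _ P0]) simp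
  also have "(\<Sum>P\<in>subs 2 {0} U - {P0}. ?G P) = (\<Sum>P\<in>subs 2 {0} U - {P0}. CARD('a) * CARD('a) + 2 * CARD('a))"
    by (rule sum.cong[OF refl]) (rule fP)
  also have "\<dots> = (CARD('a)^2 + CARD('a)) * (CARD('a) * CARD('a) + 2 * CARD('a))"
    using c_planes_3[OF sU] P0 by (simp add: card_Diff_singleton)
  finally show ?thesis using f0 by simp
qed


lemma ex_plane:
  obtains V0 P0 where "V0 \<in> S" "P0 \<in> subs 2 {0} V0"
proof -
  have "vec.dim (UNIV :: ('a ^'n) set) = CARD('n)" by (rule dim_univ)
  then have "vec.dim (UNIV :: ('a ^'n) set) \<ge> 1" using n6 by linarith
  then obtain x :: "'a ^'n" where "x \<in> UNIV" and x: "x \<noteq> 0" by (rule nz_of_dim)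
  obtain V0 where V0: "V0 \<in> S" "x \<in> V0" using S_cover[OF x] by blast
  have sV: "vec.subspace V0" "vec.dim V0 = 3" using S_sub[OF V0(1)] by auto
  have "card (subs 2 {0} V0) \<noteq> 0" using c_planes_3[OF sV] by simp
  then have "subs 2 {0} V0 \<noteq> {}" by (rule contrapos_nn) simp
  then obtain P0 where "P0 \<in> subs 2 {0} V0" by blast
  then show ?thesis using that V0(1) by blast
qed

lemma K_big: "(CARD('a)+1)*(CARD('a)+1) < Kf CARD('a) CARD('n)"
proof -
  obtain V0 P0 where V0: "V0 \<in> S" "P0 \<in> subs 2 {0} V0" by (rule ex_plane)
  have sP: "vec.subspace P0" "vec.dim P0 = 2" using V0(2) by (auto simp: subs_mem)
  have "(CARD('a)+1)*(CARD('a)+1)*(CARD('a)^3 - CARD('a)^2)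
        < Kf CARD('a) CARD('n) * (CARD('a)^3 - CARD('a)^2)"
    using arith6[OF card_field_ge2 n6] c_K[OF sP] cK[OF sP] by simp
  then show ?thesis by (metis mult_less_cancel2)
qed

lemma ex_T1:
  obtains U V0 where "U \<in> T1" "V0 \<in> S" "vec.dim (U \<inter> V0) = 2"
proof -
  obtain V0 P0 where V0: "V0 \<in> S" "P0 \<in> subs 2 {0} V0" by (rule ex_plane)
  have sP: "vec.subspace P0" "vec.dim P0 = 2" "P0 \<subseteq> V0" using V0(2) by (auto simp: subs_mem)
  have sV: "vec.subspace V0" "vec.dim V0 = 3" using S_sub[OF V0(1)] by auto
  have "card (subs 3 P0 UNIV) > 1" using cK[OF sP(1,2)] K_big by simp
  then have "\<not> subs 3 P0 UNIV \<subseteq> {V0}"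
    using card_mono[of "{V0}" "subs 3 P0 UNIV"] by auto
  then obtain W where W: "W \<in> subs 3 P0 UNIV" "W \<noteq> V0" by blast
  have sW: "vec.subspace W" "vec.dim W = 3" "P0 \<subseteq> W" using W by (auto simp: subs_mem)
  have WS: "W \<notin> S"
  proof
    assume "W \<in> S"
    moreover have "vec.dim P0 \<ge> 1" using sP(2) by simp
    ultimately have "W = V0" using S_meet_dim[of W V0 P0] V0(1) sW(3) sP(3) by blast
    then show False using W(2) by simp
  qed
  have "P0 \<subseteq> W \<inter> V0" using sW sP by blast
  then have "vec.dim (W \<inter> V0) \<ge> 2" using vec.dim_subset sP(2) by metis
  moreover have "vec.dim (W \<inter> V0) \<le> 2" using notS_dim[OF sW(1,2) WS V0(1)] .
  ultimately have d: "vec.dim (W \<inter> V0) = 2" by simp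
  then have "W \<in> T1" unfolding T1_def using WS V0(1) sW by (auto simp: ks_mem)
  then show ?thesis using that V0(1) d by blast
qed

end


context spr
begin

abbreviation "V3 \<equiv> (ksubspaces 3 :: ('a ^'n) set set)"
abbreviation "E3 \<equiv> (grassmann_adj 3 :: ('a ^'n) set \<Rightarrow> _)"

lemma adj: "E3 x y \<longleftrightarrow> x \<in> V3 \<and> y \<in> V3 \<and> vec.dim (x \<inter> y) = 2"
  by (simp add: grassmann_adj_def)

lemma S_V3: "S \<subseteq> V3" using S_sub by (auto simp: ks_mem)

lemma T1_V3: "T1 \<subseteq> V3" unfolding T1_def by auto
lemma T1_disj_S: "T1 \<inter> S = {}" unfolding T1_def by auto

lemma ball0: "ball_set V3 E3 S 0 = S" using S_V3 by auto

lemma ball1: "ball_set V3 E3 S 1 = S \<union> T1"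
proof -
  have "ball_set V3 E3 S 1 = S \<union> {y \<in> V3. \<exists>x\<in>S. E3 x y}"
    using ball0 by (simp add: One_nat_def)
  also have "{y \<in> V3. \<exists>x\<in>S. E3 x y} \<subseteq> S \<union> T1"
  proof
    fix y assume "y \<in> {y \<in> V3. \<exists>x\<in>S. E3 x y}"
    then obtain x where y: "y \<in> V3" "x \<in> S" "vec.dim (x \<inter> y) = 2" by (auto simp: adj)
    have "vec.dim (y \<inter> x) = 2" using y(3) by (simp add: Int_commute)
    then show "y \<in> S \<union> T1" unfolding T1_def using y by blast
  qed
  then have "S \<union> {y \<in> V3. \<exists>x\<in>S. E3 x y} \<subseteq> S \<union> T1" by blast
  moreover have "T1 \<subseteq> {y \<in> V3. \<exists>x\<in>S. E3 x y}"
  proof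
    fix y assume y: "y \<in> T1"
    then obtain V where V: "V \<in> S" "vec.dim (y \<inter> V) = 2" unfolding T1_def by blast
    have "vec.dim (V \<inter> y) = 2" using V(2) by (simp add: Int_commute)
    then show "y \<in> {y \<in> V3. \<exists>x\<in>S. E3 x y}" using V(1) y T1_V3 S_V3 by (auto simp: adj)
  qed
  ultimately show ?thesis by blast
qed

lemma layer1: "layer V3 E3 S 1 = T1"
proof -
  have "layer V3 E3 S (Suc 0) = ball_set V3 E3 S (Suc 0) - ball_set V3 E3 S 0"
    by (rule layer.simps(2))
  then show ?thesis using ball1 ball0 T1_disj_S by (simp add: One_nat_def) blast
qed

lemma T2_nbr: "U \<in> T2 \<Longrightarrow> \<exists>W\<in>T1. E3 W U"
proof -
  assume U: "U \<in> T2"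
  have "card {W\<in>V3. vec.dim (U \<inter> W) = 2 \<and> W \<in> T1} \<noteq> 0"
    using cnt_T2[OF U] by simp
  then have "{W\<in>V3. vec.dim (U \<inter> W) = 2 \<and> W \<in> T1} \<noteq> {}" by (rule contrapos_nn) simp
  then obtain W where W: "W \<in> V3" "vec.dim (U \<inter> W) = 2" "W \<in> T1" by blast
  have "vec.dim (W \<inter> U) = 2" using W(2) by (simp add: Int_commute)
  then show ?thesis using W T2_props(1)[OF U] by (auto simp: adj)
qed

lemma ball2: "ball_set V3 E3 S 2 = V3"
proof -
  have "ball_set V3 E3 S 2 = ball_set V3 E3 S 1 \<union> {y \<in> V3. \<exists>x\<in>ball_set V3 E3 S 1. E3 x y}"
    using ball_set.simps(2)[of V3 E3 S 1] by (simp only: Suc_1)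
  then have b2: "ball_set V3 E3 S 2 = (S \<union> T1) \<union> {y \<in> V3. \<exists>x\<in>S \<union> T1. E3 x y}"
    unfolding ball1 .
  show ?thesis
  proof
    show "ball_set V3 E3 S 2 \<subseteq> V3" unfolding b2 using S_V3 T1_V3 by blast
    show "V3 \<subseteq> ball_set V3 E3 S 2"
    proof
      fix y assume y: "y \<in> V3"
      show "y \<in> ball_set V3 E3 S 2"
      proof (cases "y \<in> S \<union> T1")
        case False
        then have "y \<in> T2" using y unfolding T2_def by blast
        then obtain W where "W \<in> T1" "E3 W y" using T2_nbr by blast
        then show ?thesis unfolding b2 using y by blast
      qed (simp add: b2)
    qed
  qed
qed

lemma layer2: "layer V3 E3 S 2 = T2"
proof -
  have "layer V3 E3 S 2 = ball_set V3 E3 S 2 - ball_set V3 E3 S 1"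
    using layer.simps(2)[of V3 E3 S 1] by (simp only: Suc_1)
  then show ?thesis using ball2 ball1 unfolding T2_def by auto
qed

lemma ball_ge2: "ball_set V3 E3 S (k + 2) = V3"
proof (induction k)
  case 0 then show ?case using ball2 by (simp only: add_0)
next
  case (Suc k)
  have "ball_set V3 E3 S (Suc (k + 2)) = ball_set V3 E3 S (k + 2) \<union>
          {y \<in> V3. \<exists>x\<in>ball_set V3 E3 S (k + 2). E3 x y}" by (rule ball_set.simps(2))
  then have "ball_set V3 E3 S (Suc (k + 2)) = V3" unfolding Suc by blast
  moreover have "Suc k + 2 = Suc (k + 2)" by simp
  ultimately show ?case by (simp only:)
qed

lemma layer_ge3: "layer V3 E3 S (Suc (Suc (Suc k))) = {}"
proof -
  have "layer V3 E3 S (Suc (Suc (Suc k))) = ball_set V3 E3 S (Suc (Suc (Suc k))) - ball_set V3 E3 S (Suc (Suc k))"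
    by (rule layer.simps(2))
  moreover have "Suc (Suc (Suc k)) = Suc k + 2" "Suc (Suc k) = k + 2" by simp_all
  ultimately show ?thesis using ball_ge2[of k] ball_ge2[of "Suc k"] by (simp only: Diff_cancel)
qed

lemma layer_cases: "layer V3 E3 S i = (if i = 0 then S else if i = 1 then T1 else if i = 2 then T2 else {})"
proof -
  consider "i = 0" | "i = 1" | "i = 2" | k where "i = Suc (Suc (Suc k))"
    by (metis One_nat_def Suc_1 not0_implies_Suc)
  then show ?thesis
  proof cases
    case 1 then show ?thesis using ball0 by simp
  next
    case 2 then show ?thesis using layer1 by simp
  next
    case 3 then show ?thesis using layer2 by simp
  next
    case 4 then show ?thesis using layer_ge3 by simp
  qed
qed


definition nb :: "('a ^'n) set \<Rightarrow> ('a ^'n) set set \<Rightarrow> ('a ^'n) set set" where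
  "nb x X = {W\<in>V3. vec.dim (x \<inter> W) = 2 \<and> W \<in> X}"

lemma nb_split1: "card (nb x UNIV) = card (nb x (S \<union> T1)) + card (nb x T2)"
proof -
  have "nb x UNIV = nb x (S \<union> T1) \<union> nb x T2" unfolding nb_def T2_def by blast
  moreover have "nb x (S \<union> T1) \<inter> nb x T2 = {}" unfolding nb_def T2_def by blast
  ultimately show ?thesis by (simp add: card_Un_disjoint)
qed

lemma nb_split2: "card (nb x (S \<union> T1)) = card (nb x S) + card (nb x T1)"
proof -
  have "nb x (S \<union> T1) = nb x S \<union> nb x T1" unfolding nb_def by blast
  moreover have "nb x S \<inter> nb x T1 = {}" unfolding nb_def using T1_disj_S by blast
  ultimately show ?thesis by (simp add: card_Un_disjoint)
qed

lemma adj_set: "x \<in> V3 \<Longrightarrow> {y \<in> V3. E3 x y \<and> y \<in> X} = nb x X"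
  unfolding nb_def by (auto simp: adj)

lemma adj_set2: "x \<in> V3 \<Longrightarrow> {y \<in> V3. E3 x y \<and> 0 < i \<and> y \<in> X} = (if 0 < i then nb x X else {})"
  unfolding nb_def by (auto simp: adj)

lemma T2_nonempty: "T2 \<noteq> {}"
proof -
  obtain U V0 where U: "U \<in> T1" "V0 \<in> S" "vec.dim (U \<inter> V0) = 2" by (rule ex_T1)
  let ?q = "CARD('a)" and ?K = "Kf CARD('a) CARD('n)"
  have U3: "U \<in> V3" using U T1_V3 by blast
  have D: "card (nb U UNIV) = (?q^2 + ?q + 1) * (?K - 1)" unfolding nb_def by (rule deg[OF U3])
  have C: "card (nb U (S \<union> T1)) = (?K - 1) + (?q^2 + ?q) * (?q * ?q + 2 * ?q)"
    unfolding nb_def by (rule cnt_T1[OF U])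
  have Kb: "?q * ?q + 2 * ?q < ?K - 1" using K_big by (simp add: algebra_simps)
  have qp: "?q^2 + ?q > 0" using card_field_ge2 by simp
  have "(?q^2 + ?q) * (?q * ?q + 2 * ?q) < (?q^2 + ?q) * (?K - 1)"
    by (rule mult_strict_left_mono[OF Kb qp])
  then have "card (nb U (S \<union> T1)) < card (nb U UNIV)" unfolding C D by (simp add: algebra_simps)
  then have c0: "card (nb U T2) \<noteq> 0" using nb_split1[of U] by linarith
  have "nb U T2 \<noteq> {}"
  proof
    assume "nb U T2 = {}"
    then have "card (nb U T2) = 0" by (simp only: card.empty)
    then show False using c0 by simp
  qed
  then show ?thesis unfolding nb_def by blast
qed

declare layer.simps[simp del] ball_set.simps[simp del]

theorem main:
  "completely_regular V3 E3 S \<and> covering_radius V3 E3 S = 2"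
proof
  let ?q = "CARD('a)" and ?K = "Kf CARD('a) CARD('n)"
  define N where "N = ?q^2 + ?q + 1"
  define D where "D = N * (?K - 1)"
  define C1 where "C1 = (?K - 1) + (?q^2 + ?q) * (?q * ?q + 2 * ?q)"
  define G2 where "G2 = N * ((?q + 1) * (?q + 1))"
  define ga :: "nat \<Rightarrow> nat" where "ga i = (if i = 0 then 0 else if i = 1 then 1 else G2)" for i
  define al :: "nat \<Rightarrow> nat" where "al i = (if i = 0 then 0 else if i = 1 then C1 - 1 else D - G2)" for i
  define be :: "nat \<Rightarrow> nat" where "be i = (if i = 0 then D else if i = 1 then D - C1 else 0)" for i
  have degx: "card (nb x UNIV) = D" if "x \<in> V3" for x
    unfolding nb_def D_def N_def by (rule deg[OF that])
  show "completely_regular V3 E3 S"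
    unfolding completely_regular_def
  proof (intro exI ballI allI)
    fix i x assume x: "x \<in> layer V3 E3 S i"
    have xV: "x \<in> V3" using x layer_cases[of i] S_V3 T1_V3 unfolding T2_def
      by (auto split: if_splits)
    have e1: "{y \<in> V3. E3 x y \<and> 0 < i \<and> y \<in> layer V3 E3 S (i - 1)} =
              (if 0 < i then nb x (layer V3 E3 S (i - 1)) else {})" by (rule adj_set2[OF xV])
    have e2: "{y \<in> V3. E3 x y \<and> y \<in> layer V3 E3 S i} = nb x (layer V3 E3 S i)"
      by (rule adj_set[OF xV])
    have e3: "{y \<in> V3. E3 x y \<and> y \<in> layer V3 E3 S (Suc i)} = nb x (layer V3 E3 S (Suc i))"
      by (rule adj_set[OF xV])
    consider "i = 0" | "i = 1" | "i = 2" | k where "i = Suc (Suc (Suc k))"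
      by (metis One_nat_def Suc_1 not0_implies_Suc)
    then show "card {y \<in> V3. E3 x y \<and> 0 < i \<and> y \<in> layer V3 E3 S (i - 1)} = ga i \<and>
          card {y \<in> V3. E3 x y \<and> y \<in> layer V3 E3 S i} = al i \<and>
          card {y \<in> V3. E3 x y \<and> y \<in> layer V3 E3 S (Suc i)} = be i"
    proof cases
      case 1
      have xS: "x \<in> S" using x layer_cases[of 0] 1 by simp
      note l0 = layer_cases[of 0] layer_cases[of "Suc 0"]
      have a: "nb x S = {}" unfolding nb_def by (rule S_noS[OF xS])
      have b: "card (nb x T1) = D" using S_allT1[OF xS] degx[OF xV] unfolding nb_def by simp
      show ?thesis unfolding e1 e2 e3 using 1 l0 a b by (simp add: ga_def al_def be_def)
    next
      case 2
      have xT: "x \<in> T1" using x layer_cases[of 1] 2 by simp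
      then obtain V0 where V0: "V0 \<in> S" "vec.dim (x \<inter> V0) = 2" unfolding T1_def by blast
      note l = layer_cases[of 0] layer_cases[of 1] layer_cases[of "Suc 1"]
      have a: "card (nb x S) = 1" unfolding nb_def using T1_S[OF xT V0] by simp
      have c: "card (nb x (S \<union> T1)) = C1" unfolding nb_def C1_def by (rule cnt_T1[OF xT V0])
      have b: "card (nb x T1) = C1 - 1" using nb_split2[of x] a c by simp
      have d: "card (nb x T2) = D - C1" using nb_split1[of x] c degx[OF xV] by simp
      show ?thesis unfolding e1 e2 e3 using 2 l a b d by (simp add: ga_def al_def be_def)
    next
      case 3
      have xT: "x \<in> T2" using x layer_cases[of 2] 3 by simp
      note l = layer_cases[of 1] layer_cases[of 2] layer_cases[of "Suc 2"]
      have a: "card (nb x S) = 0" unfolding nb_def using T2_noS[OF xT] by simp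
      have g: "card (nb x T1) = G2" unfolding nb_def G2_def N_def by (rule cnt_T2[OF xT])
      have b: "card (nb x T2) = D - G2" using nb_split1[of x] nb_split2[of x] a g degx[OF xV] by simp
      have z: "nb x {} = {}" unfolding nb_def by simp
      show ?thesis unfolding e1 e2 e3 using 3 l b g z by (simp add: ga_def al_def be_def)
    next
      case 4
      then show ?thesis using x layer_cases[of i] by simp
    qed
  qed
  show "covering_radius V3 E3 S = 2"
    unfolding covering_radius_def
  proof (rule Greatest_equality)
    show "layer V3 E3 S 2 \<noteq> {}" using layer2 T2_nonempty by simp
    fix y assume "layer V3 E3 S y \<noteq> {}"
    then show "y \<le> 2" using layer_cases[of y] by (simp split: if_splits)
  qed
qed

end

theorem corollary2p2:
  fixes S :: "('a::{field,finite} ^ 'n::finite) set set"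
  assumes "CARD('n) \<ge> 6" and "3 dvd CARD('n)"
    and "spread3 S"
  shows "completely_regular (ksubspaces 3) (grassmann_adj 3) S
       \<and> covering_radius (ksubspaces 3) (grassmann_adj 3) S = 2"
proof -
  interpret spr S using assms(1,3) by unfold_locales
  show ?thesis by (rule main)
qed

end
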